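(* Assume $q>2$. For all integers $d\ge0$, $$\sum_{a\in A^+(d)}\frac{a(t_1)}{a^2}=\frac{b_d(t_1)(t_1-\theta^{q^d})}{(t_1-\theta)\,l_d^2},$$ $$\sum_{a\in A^+(d)}\frac{a(t_1)a(t_2)}{a^2}=\frac{b_d(t_1)b_d(t_2)}{(t_1-\theta)(t_2-\theta)l_d^2}\Big[(t_1-\theta)(t_2-\theta)+(t_1-\theta)(\theta-\theta^{q^d})+(t_2-\theta)(\theta-\theta^{q^d})\Big].$$
   Context: $A=\mathbb{F}_q[\theta]$, $A^+(d)$ the set of monic polynomials of degree $d$; $t_1,t_2$ indeterminates and $a(t_i)$ is $a$ with $\theta$ replaced by $t_i$. $l_0=1$, $l_i=(\theta-\theta^{q^i})l_{i-1}$ for $i\ge1$; $b_0(t)=1$, $b_i(t)=\prod_{k=0}^{i-1}(t-\theta^{q^k})$ for $i\ge1$. *)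

theory Defs
  imports "HOL-Computational_Algebra.Polynomial" "HOL-Computational_Algebra.Fraction_Field"
begin

text \<open>Setting: F_q is a finite field type 'a, q = CARD('a); A = F_q[theta] is 'a poly,
  theta = [:0,1:].  K1 = F_q(theta)(t1) is the rational function field
  ('a poly fract) poly fract, and K2 = K1(t2) is K1 poly fract.\<close>

type_synonym 'a K1 = "'a poly fract poly fract"
type_synonym 'a K2 = "'a poly fract poly fract poly fract"

definition Aplus :: "nat \<Rightarrow> ('a::field) poly set" where
  "Aplus d = {a. lead_coeff a = 1 \<and> degree a = d}"

fun lcar :: "nat \<Rightarrow> ('a::{finite,field}) poly" where
  "lcar 0 = 1"
| "lcar (Suc i) = ([:0,1:] - [:0,1:] ^ (card (UNIV :: 'a set) ^ Suc i)) * lcar i"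

definition bcar :: "nat \<Rightarrow> nat \<Rightarrow> 'b::comm_ring_1 \<Rightarrow> 'b \<Rightarrow> 'b" where
  "bcar q i t th = (\<Prod>k<i. (t - th ^ (q ^ k)))"

definition to_fract :: "'b::idom \<Rightarrow> 'b fract" where "to_fract x = Fract x 1"

definition const1 :: "'a::field \<Rightarrow> 'a K1" where
  "const1 c = to_fract [: to_fract [:c:] :]"
definition const2 :: "'a::field \<Rightarrow> 'a K2" where
  "const2 c = to_fract [: const1 c :]"

definition theta1 :: "'a::field K1" where "theta1 = to_fract [: to_fract [:0,1:] :]"
definition t1_1 :: "'a::field K1" where "t1_1 = to_fract [:0,1:]"
definition theta2 :: "'a::field K2" where "theta2 = to_fract [: theta1 :]"
definition t1_2 :: "'a::field K2" where "t1_2 = to_fract [: t1_1 :]"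
definition t2_2 :: "'a::field K2" where "t2_2 = to_fract [:0,1:]"

definition evA :: "('a::field \<Rightarrow> 'b::comm_ring_1) \<Rightarrow> 'a poly \<Rightarrow> 'b \<Rightarrow> 'b" where
  "evA c a x = poly (map_poly c a) x"

end

theory Submission
  imports Defs
begin



lemma ff_pow_card: fixes x :: "'a::{finite,field}" shows "x ^ card (UNIV :: 'a set) = x"
proof (cases "x = 0")
  case False
  have "x * (\<Prod>y\<in>UNIV-{0}. x * y) = x * x ^ (card (UNIV :: 'a set) - 1) * \<Prod>(UNIV-{0})"
    by (simp add: prod.distrib mult_ac)
  also have "x * x ^ (card (UNIV :: 'a set) - 1) = x ^ Suc (card (UNIV :: 'a set) - 1)"
    by (subst power_Suc) auto
  also have "Suc (card (UNIV :: 'a set) - 1) = card (UNIV :: 'a set)"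
    using finite_UNIV_card_ge_0[where ?'a = 'a] by simp
  also have "(\<Prod>y\<in>UNIV-{0}. x * y) = (\<Prod>y\<in>UNIV-{0}. y)"
    by (rule prod.reindex_bij_witness[of _ "\<lambda>y. y / x" "\<lambda>y. x * y"]) (use False in auto)
  finally show ?thesis
    by simp
qed (use finite_UNIV_card_ge_0[where ?'a = 'a] in auto)

lemma ff_card_zero: "of_nat (card (UNIV :: 'a::{finite,field} set)) = (0::'a)"
proof -
  have "(\<Sum>c\<in>(UNIV::'a set). c) = (\<Sum>c\<in>UNIV. c + 1)"
    by (rule sum.reindex_bij_witness[of _ "\<lambda>y. y + 1" "\<lambda>y. y - 1"]) auto
  also have "\<dots> = (\<Sum>c\<in>UNIV. c) + of_nat (card (UNIV :: 'a set))"
    by (simp add: sum.distrib)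
  finally show ?thesis by simp
qed

lemma ff_sum_zero: assumes "card (UNIV :: 'a::{finite,field} set) > 2"
  shows "(\<Sum>c\<in>(UNIV::'a set). c) = 0"
proof -
  have "\<exists>l::'a. l \<noteq> 0 \<and> l \<noteq> 1"
  proof (rule ccontr)
    assume "\<not> ?thesis"
    hence "(UNIV::'a set) \<subseteq> {0,1}" by auto
    hence "card (UNIV::'a set) \<le> card {0::'a,1}" by (intro card_mono) auto
    also have "\<dots> \<le> 2" by (simp add: card_insert_le_m1)
    finally show False using assms by simp
  qed
  then obtain l :: 'a where l: "l \<noteq> 0" "l \<noteq> 1" by blast
  have "(\<Sum>c\<in>(UNIV::'a set). c) = (\<Sum>c\<in>UNIV. l * c)"
    by (rule sum.reindex_bij_witness[of _ "\<lambda>y. l * y" "\<lambda>y. y / l"]) (use l in auto)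
  also have "\<dots> = l * (\<Sum>c\<in>UNIV. c)" by (simp add: sum_distrib_left)
  finally have "(l - 1) * (\<Sum>c\<in>(UNIV::'a set). c) = 0" by (simp add: algebra_simps)
  thus ?thesis using l by simp
qed

lemma ff_sum_inv_shift: assumes "card (UNIV :: 'a::{finite,field} set) > 2"
  shows "(\<Sum>c'\<in>(UNIV::'a set) - {c}. 1 / (c - c')) = 0"
proof -
  have "(\<Sum>c'\<in>(UNIV::'a set) - {c}. 1 / (c - c')) = (\<Sum>u\<in>UNIV - {0}. 1 / u)"
    by (rule sum.reindex_bij_witness[of _ "\<lambda>u. c - u" "\<lambda>c'. c - c'"]) auto
  also have "\<dots> = (\<Sum>u\<in>UNIV - {0}. u)"
    by (rule sum.reindex_bij_witness[of _ "\<lambda>u. 1 / u" "\<lambda>u. 1 / u"]) auto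
  also have "\<dots> = (\<Sum>u\<in>UNIV. u)"
    by (rule sum.mono_neutral_left) auto
  finally show ?thesis using ff_sum_zero[OF assms] by simp
qed




locale fhom =
  fixes \<iota> :: "'a::{finite,field} \<Rightarrow> 'b::field" and q :: nat
  assumes hadd: "\<iota> (x + y) = \<iota> x + \<iota> y" and hmul: "\<iota> (x * y) = \<iota> x * \<iota> y"
    and h1: "\<iota> 1 = 1" and hinj: "inj \<iota>"
    and q_def: "q = card (UNIV::'a set)" and q2: "q > 2"
begin


lemma h0[simp]: "\<iota> 0 = 0"
  using hadd[of 0 0] by (metis add_cancel_left_right)

lemma hneg[simp]: "\<iota> (- x) = - \<iota> x"
  using hadd[of x "-x"] by (simp add: eq_neg_iff_add_eq_0 add.commute)

lemma hdiff[simp]: "\<iota> (x - y) = \<iota> x - \<iota> y"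
  using hadd[of x "-y"] by simp

lemma heq0[simp]: "\<iota> x = 0 \<longleftrightarrow> x = 0"
  using hinj h0 by (metis injD)

lemma heq[simp]: "\<iota> x = \<iota> y \<longleftrightarrow> x = y"
  using hinj by (auto dest: injD)

lemma hinv[simp]: "\<iota> (inverse x) = inverse (\<iota> x)"
proof (cases "x = 0")
  case False
  have "\<iota> x * \<iota> (inverse x) = 1" using False by (simp flip: hmul add: h1)
  thus ?thesis using False by (simp add: inverse_unique)
qed simp

lemma hdiv[simp]: "\<iota> (x / y) = \<iota> x / \<iota> y"
  by (simp add: divide_inverse hmul)

lemma hpow[simp]: "\<iota> (x ^ n) = \<iota> x ^ n"
  by (induction n) (simp_all add: h1 hmul)

lemma hsum: "\<iota> (sum f A) = (\<Sum>x\<in>A. \<iota> (f x))"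
  by (induction A rule: infinite_finite_induct) (simp_all add: hadd)

lemma hnat[simp]: "\<iota> (of_nat n) = of_nat n"
  by (induction n) (simp_all add: hadd h1)

lemma qq_zero: "(of_nat (q) :: 'b) = 0"
  using hnat[of q] ff_card_zero[where 'a='a] q_def by simp

lemma hpowq[simp]: "\<iota> c ^ q = \<iota> c"
  by (metis hpow ff_pow_card q_def)

lemma card_range: "card (range \<iota>) = q"
  by (simp add: card_image hinj q_def)

definition P :: "'b \<Rightarrow> 'b" where "P z = (\<Prod>c\<in>UNIV. z - \<iota> c)"

definition FP :: "'b poly" where "FP = (\<Prod>c\<in>UNIV. [:- \<iota> c, 1:])"

lemma poly_FP: "poly FP z = P z"
  by (simp add: FP_def P_def poly_prod)

lemma degree_FP: "degree FP = q"
  unfolding FP_def q_def by (subst degree_prod_eq_sum_degree) auto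

lemma lead_FP: "lead_coeff FP = 1"
  unfolding FP_def by (simp add: lead_coeff_prod)

lemma FP_eq: "FP = monom 1 q - [:0,1:]"
proof (rule poly_eqI_degree_lead_coeff[where n = "q" and A = "range \<iota>"])
  show "coeff FP q = coeff (monom 1 q - [:0, 1:]) q"
    using lead_FP degree_FP q2 by (simp add: coeff_pCons split: nat.split)
  show "q \<le> card (range \<iota>)" by (simp add: card_range)
  show "degree FP \<le> q" by (simp add: degree_FP)
  show "degree (monom 1 q - [:0, 1:] :: 'b poly) \<le> q"
    using q2 by (intro order.trans[OF degree_diff_le_max]) (auto simp: degree_monom_eq)
  fix z assume "z \<in> range \<iota>"
  then obtain c where z: "z = \<iota> c" by auto
  have "poly FP z = 0" unfolding poly_FP P_def z
    by (rule prod_zero) auto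
  moreover have "poly (monom 1 q - [:0, 1:]) z = 0"
    by (simp add: z poly_monom)
  ultimately show "poly FP z = poly (monom 1 q - [:0, 1:]) z" by simp
qed

lemma P_eq: "P z = z ^ q - z"
  using arg_cong[OF FP_eq, of "\<lambda>p. poly p z"] by (simp add: poly_FP poly_monom)

lemma P_zero_iff: "P z = 0 \<longleftrightarrow> z \<in> range \<iota>"
  unfolding P_def by auto

lemma P_add: fixes a b :: 'b shows "P (a + b) = P a + P b"
proof -
  define G where "G = (\<Prod>c\<in>UNIV. [:b - \<iota> c, 1:]) - FP - [:P b:]"
  have pG: "poly G z = P (z + b) - P z - P b" for z
    by (simp add: G_def poly_FP P_def poly_prod algebra_simps)
  have "G = 0"
  proof (rule poly_eqI_degree_lead_coeff[where n = "q" and A = "range \<iota>"])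
    have d1: "degree (\<Prod>c\<in>UNIV. [:b - \<iota> c, 1:]) = q"
      unfolding q_def by (subst degree_prod_eq_sum_degree) auto
    have l1: "lead_coeff (\<Prod>c\<in>UNIV. [:b - \<iota> c, 1:]) = 1"
      by (simp add: lead_coeff_prod)
    show "coeff G q = coeff 0 q"
      using d1 l1 degree_FP lead_FP q2 by (simp add: G_def coeff_pCons split: nat.split)
    show "q \<le> card (range \<iota>)" by (simp add: card_range)
    show "degree G \<le> q" unfolding G_def
      using d1 degree_FP by (intro degree_diff_le) auto
    show "degree (0::'b poly) \<le> q" by simp
    fix z assume "z \<in> range \<iota>"
    then obtain c where z: "z = \<iota> c" by auto
    have "P (z + b) = P b" unfolding P_def z
      by (rule prod.reindex_bij_witness[of _ "\<lambda>c'. c' + c" "\<lambda>c'. c' - c"]) (auto simp: algebra_simps)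
    moreover have "P z = 0" using P_zero_iff z by auto
    ultimately show "poly G z = poly 0 z" by (simp add: pG)
  qed
  thus ?thesis using pG[of a] by (simp add: diff_eq_eq add.commute)
qed

lemma frob_add: fixes a b :: 'b shows "(a + b) ^ q = a ^ q + b ^ q"
  using P_add[of a b] by (simp add: P_eq algebra_simps)

lemma frob_sum: fixes f :: "'c \<Rightarrow> 'b" shows "(sum f A) ^ q = (\<Sum>x\<in>A. f x ^ q)"
  using q2 by (induction A rule: infinite_finite_induct) (simp_all add: frob_add)

lemma frob_diff: fixes a b :: 'b shows "(a - b) ^ q = a ^ q - b ^ q"
proof -
  have "a ^ q = (a - b) ^ q + b ^ q" using frob_add[of "a - b" b] by simp
  thus ?thesis by simp
qed

lemma P_smult: "P (\<iota> c * z) = \<iota> c * P z"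
  by (simp add: P_eq power_mult_distrib algebra_simps)

lemma P_diff: "P (a - b) = P a - P b"
  by (simp add: P_eq frob_diff)

end



context fhom begin

lemma sum_neg_reindex: "(\<Sum>c\<in>UNIV. f (\<iota> c)) = (\<Sum>c\<in>UNIV. f (- \<iota> c))"
  by (rule sum.reindex_bij_witness[of _ "\<lambda>c. - c" "\<lambda>c. - c"]) auto

lemma sum_one: "(\<Sum>c\<in>(UNIV::'a set). (1::'b)) = 0"
  using qq_zero q_def by simp

lemma pderiv_FP: "pderiv FP = -1"
proof -
  have "pderiv (monom 1 q - [:0,1:] :: 'b poly) = monom (of_nat q) (q - 1) - 1"
    by (simp add: pderiv_monom pderiv_diff pderiv_pCons one_pCons)
  thus ?thesis using FP_eq qq_zero by simp
qed

lemma sum_prod_rest: "(\<Sum>c\<in>UNIV. \<Prod>c'\<in>UNIV - {c}. z - \<iota> c') = -1"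
proof -
  have "poly (pderiv FP) z = (\<Sum>c\<in>UNIV. \<Prod>c'\<in>UNIV - {c}. z - \<iota> c')"
    unfolding FP_def by (simp add: pderiv_prod poly_sum poly_prod pderiv_pCons)
  thus ?thesis using pderiv_FP by simp
qed

lemma sum_inv1: assumes "P z \<noteq> 0"
  shows "(\<Sum>c\<in>UNIV. 1 / (z - \<iota> c)) = - 1 / P z"
proof -
  have nz: "z - \<iota> c \<noteq> 0" for c using assms P_zero_iff by auto
  have "P z * (\<Sum>c\<in>UNIV. 1 / (z - \<iota> c)) = (\<Sum>c\<in>UNIV. P z / (z - \<iota> c))"
    by (simp add: sum_distrib_left)
  also have "\<dots> = (\<Sum>c\<in>UNIV. \<Prod>c'\<in>UNIV - {c}. z - \<iota> c')"
  proof (rule sum.cong[OF refl])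
    fix c
    have "P z = (z - \<iota> c) * (\<Prod>c'\<in>UNIV - {c}. z - \<iota> c')"
      unfolding P_def by (rule prod.remove) auto
    thus "P z / (z - \<iota> c) = (\<Prod>c'\<in>UNIV - {c}. z - \<iota> c')"
      using nz[of c] by simp
  qed
  also have "\<dots> = -1" by (rule sum_prod_rest)
  finally show ?thesis using assms by (simp add: field_simps)
qed

lemma sum_inv2: assumes "P z \<noteq> 0"
  shows "(\<Sum>c\<in>UNIV. 1 / (z - \<iota> c)^2) = (\<Sum>c\<in>UNIV. 1 / (z - \<iota> c))^2"
proof -
  define f where "f c = 1 / (z - \<iota> c)" for c
  define g where "g c c' = 1 / (\<iota> c - \<iota> c')" for c c'
  have nz: "z - \<iota> c \<noteq> 0" for c using assms P_zero_iff by auto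
  have G0: "(\<Sum>c'\<in>UNIV. if c' = c then 0 else g c c') = 0" for c
  proof -
    have "(\<Sum>c'\<in>UNIV. if c' = c then 0 else g c c') = (\<Sum>c'\<in>UNIV - {c}. g c c')"
      by (rule sum.mono_neutral_cong_right) auto
    also have "\<dots> = \<iota> (\<Sum>c'\<in>UNIV - {c}. 1 / (c - c'))"
      by (simp add: hsum g_def h1)
    also have "\<dots> = 0" using ff_sum_inv_shift[of c] q2 q_def by simp
    finally show ?thesis .
  qed
  have key: "(if c' = c then f c ^ 2 else f c * f c') =
      f c ^ 2 * (if c' = c then 1 else 0) + f c * (if c' = c then 0 else g c c')
      + f c' * (if c = c' then 0 else g c' c)" for c c'
  proof (cases "c' = c")
    case False
    hence d: "\<iota> c - \<iota> c' \<noteq> 0" "\<iota> c' - \<iota> c \<noteq> 0" by auto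
    have aux: "1/A * (1/B) = 1/A * (1/(B - A)) + 1/B * (1/(A - B))"
      if "A \<noteq> 0" "B \<noteq> 0" "B - A \<noteq> 0" for A B :: 'b
    proof -
      have e1: "1/B * (1/(A - B)) = - (1/B * (1/(B - A)))"
        by (metis minus_diff_eq divide_minus_right mult_minus_right)
      have "1/A - 1/B = (B - A) / (A * B)" using that by (simp add: field_simps)
      hence "1/A * (1/(B - A)) - 1/B * (1/(B - A)) = (B - A) / (A * B) * (1/(B - A))"
        by (simp add: algebra_simps)
      also have "\<dots> = 1/A * (1/B)" using that by simp
      finally show ?thesis using e1 by simp
    qed
    have "f c * f c' = f c * g c c' + f c' * g c' c"
      using aux[of "z - \<iota> c" "z - \<iota> c'"] nz[of c] nz[of c'] d unfolding f_def g_def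
      by (simp add: algebra_simps)
    thus ?thesis using False by simp
  qed simp
  have "(\<Sum>c\<in>UNIV. f c)^2 = (\<Sum>c\<in>UNIV. \<Sum>c'\<in>UNIV. f c * f c')"
    by (simp add: power2_eq_square sum_product)
  also have "\<dots> = (\<Sum>c\<in>UNIV. \<Sum>c'\<in>UNIV. if c' = c then f c ^ 2 else f c * f c')"
    by (intro sum.cong refl) (auto simp: power2_eq_square)
  also have "\<dots> = (\<Sum>c\<in>UNIV. \<Sum>c'\<in>UNIV. f c ^ 2 * (if c' = c then 1 else 0))
      + (\<Sum>c\<in>UNIV. f c * (\<Sum>c'\<in>UNIV. if c' = c then 0 else g c c'))
      + (\<Sum>c\<in>UNIV. \<Sum>c'\<in>UNIV. f c' * (if c = c' then 0 else g c' c))"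
    by (simp add: key sum.distrib sum_distrib_left)
  also have "(\<Sum>c\<in>UNIV. \<Sum>c'\<in>UNIV. f c' * (if c = c' then 0 else g c' c))
      = (\<Sum>c'\<in>UNIV. f c' * (\<Sum>c\<in>UNIV. (if c = c' then 0 else g c' c)))"
    by (subst sum.swap) (simp add: sum_distrib_left)
  also have "\<dots> = 0" using G0 by simp
  finally have X: "(\<Sum>c\<in>UNIV. f c)^2 = (\<Sum>c\<in>UNIV. \<Sum>c'\<in>UNIV. f c ^ 2 * (if c' = c then 1 else 0)) + 0 + 0" using G0 by simp
  have Y: "(\<Sum>c\<in>UNIV. f c * (\<Sum>c'\<in>UNIV. if c' = c then 0 else g c c')) = 0"
    using G0 by simp
  have Z: "(\<Sum>c\<in>UNIV. \<Sum>c'\<in>UNIV. f c ^ 2 * (if c' = c then 1 else 0)) = (\<Sum>c\<in>UNIV. f c ^ 2)"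
    by (simp add: if_distrib cong: if_cong)
  have "(\<Sum>c\<in>UNIV. f c)^2 = (\<Sum>c\<in>UNIV. f c ^ 2)" using X Y Z by simp
  thus ?thesis by (simp add: f_def power_one_over)
qed

lemma sum_inv1': assumes "P z \<noteq> 0"
  shows "(\<Sum>c\<in>UNIV. 1 / (z + \<iota> c)) = - 1 / P z"
  using sum_neg_reindex[of "\<lambda>x. 1 / (z + x)"] sum_inv1[OF assms] by simp

lemma sum_inv2': assumes "P z \<noteq> 0"
  shows "(\<Sum>c\<in>UNIV. 1 / (z + \<iota> c)^2) = 1 / (P z)^2"
  using sum_neg_reindex[of "\<lambda>x. 1 / (z + x)^2"] sum_neg_reindex[of "\<lambda>x. 1 / (z + x)"]
    sum_inv2[OF assms] sum_inv1[OF assms] by (simp add: power_one_over)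

end



definition Vs :: "nat \<Rightarrow> 'a::zero poly set" where "Vs d = {v. \<forall>i\<ge>d. coeff v i = 0}"

lemma Vs_0: "Vs 0 = {0}"
  by (auto simp: Vs_def poly_eq_iff)

lemma Vs_Suc_bij: "bij_betw (\<lambda>(c,w). w + monom c d) (UNIV \<times> Vs d) (Vs (Suc d) :: 'a::comm_ring_1 poly set)"
proof (rule bij_betw_byWitness[where f' = "\<lambda>v. (coeff v d, v - monom (coeff v d) d)"])
  show "\<forall>a\<in>UNIV \<times> Vs d. (\<lambda>v. (coeff v d, v - monom (coeff v d) d)) ((\<lambda>(c, w). w + monom c d) a) = a"
    by (auto simp: Vs_def coeff_monom)
  show "\<forall>a'\<in>(Vs (Suc d) :: 'a poly set). (\<lambda>(c, w). w + monom c d) ((\<lambda>v. (coeff v d, v - monom (coeff v d) d)) a') = a'"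
    by (auto simp: algebra_simps)
  show "(\<lambda>(c, w). w + monom c d) ` (UNIV \<times> Vs d) \<subseteq> Vs (Suc d)"
    by (auto simp: Vs_def coeff_monom)
  show "(\<lambda>v. (coeff v d, v - monom (coeff v d) d)) ` Vs (Suc d) \<subseteq> UNIV \<times> Vs d"
    by (auto simp: Vs_def coeff_monom le_Suc_eq)
qed

lemma finite_Vs: "finite (Vs d :: 'a::{finite,comm_ring_1} poly set)"
proof (induction d)
  case 0 thus ?case by (simp add: Vs_0)
next
  case (Suc d)
  have "Vs (Suc d) = (\<lambda>(c,w). w + monom c d) ` (UNIV \<times> (Vs d :: 'a poly set))"
    using bij_betw_imp_surj_on[OF Vs_Suc_bij[of d, where 'a='a]] by (rule sym)
  thus ?case using Suc by simp
qed

lemma sum_Vs_Suc: "(\<Sum>v\<in>Vs (Suc d). f v) = (\<Sum>c\<in>UNIV. \<Sum>w\<in>(Vs d :: 'a::{finite,comm_ring_1} poly set). f (w + monom c d))"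
proof -
  have "(\<Sum>c\<in>UNIV. \<Sum>w\<in>(Vs d :: 'a poly set). f (w + monom c d)) = (\<Sum>(c,w)\<in>UNIV \<times> Vs d. f (w + monom c d))"
    by (rule sum.cartesian_product)
  also have "\<dots> = (\<Sum>v\<in>Vs (Suc d). f v)"
    using sum.reindex_bij_betw[OF Vs_Suc_bij[of d], of f] by (simp add: case_prod_beta')
  finally show ?thesis by simp
qed

lemma Aplus_eq: "Aplus d = (\<lambda>v. monom 1 d + v) ` (Vs d :: 'a::field poly set)"
proof (intro set_eqI iffI)
  fix a :: "'a poly" assume "a \<in> Aplus d"
  hence a: "lead_coeff a = 1" "degree a = d" by (auto simp: Aplus_def)
  have "a - monom 1 d \<in> Vs d"
    unfolding Vs_def using a by (auto simp: coeff_monom coeff_eq_0)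
  thus "a \<in> (\<lambda>v. monom 1 d + v) ` Vs d" by (intro image_eqI[of _ _ "a - monom 1 d"]) auto
next
  fix a :: "'a poly" assume "a \<in> (\<lambda>v. monom 1 d + v) ` Vs d"
  then obtain v where v: "v \<in> Vs d" "a = monom 1 d + v" by auto
  have c: "coeff a i = (if i = d then 1 else 0)" if "i \<ge> d" for i
    using v that by (auto simp: Vs_def coeff_monom)
  have "degree a = d"
  proof (rule antisym)
    show "degree a \<le> d" using c by (intro degree_le) auto
    show "d \<le> degree a" using c[of d] by (intro le_degree) auto
  qed
  thus "a \<in> Aplus d" using c[of d] by (simp add: Aplus_def)
qed

lemma sum_Aplus: "(\<Sum>a\<in>Aplus d. f a) = (\<Sum>v\<in>(Vs d :: 'a::field poly set). f (monom 1 d + v))"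
  unfolding Aplus_eq by (subst sum.reindex) (auto simp: inj_on_def)

context fhom begin

lemma evA_add: "evA \<iota> (a + b) x = evA \<iota> a x + evA \<iota> b x"
proof -
  have "map_poly \<iota> (a + b) = map_poly \<iota> a + map_poly \<iota> b"
    by (intro poly_eqI) (simp add: coeff_map_poly hadd)
  thus ?thesis by (simp add: evA_def)
qed

lemma evA_monom: "evA \<iota> (monom c n) x = \<iota> c * x ^ n"
  by (simp add: evA_def map_poly_monom poly_monom)

lemma evA_const: "evA \<iota> [:c:] x = \<iota> c"
  by (simp add: evA_def map_poly_pCons)

lemma evA_X: "evA \<iota> [:0,1:] x = x"
  by (simp add: evA_def map_poly_pCons h1)

lemma evA_smult: "evA \<iota> (smult c a) x = \<iota> c * evA \<iota> a x"
  by (simp add: evA_def map_poly_smult hmul)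

lemma evA_pCons0: "evA \<iota> (pCons 0 a) x = x * evA \<iota> a x"
  by (simp add: evA_def map_poly_pCons)

lemma evA_mult: "evA \<iota> (a * b) x = evA \<iota> a x * evA \<iota> b x"
proof (induction a)
  case (pCons c a)
  have "pCons c a * b = smult c b + pCons 0 (a * b)" by simp
  hence "evA \<iota> (pCons c a * b) x = \<iota> c * evA \<iota> b x + x * (evA \<iota> a x * evA \<iota> b x)"
    by (simp add: evA_add evA_smult evA_pCons0 pCons.IH)
  moreover have "evA \<iota> (pCons c a) x = \<iota> c + x * evA \<iota> a x"
    by (simp add: evA_def map_poly_pCons)
  ultimately show ?case by (simp add: algebra_simps)
qed (simp add: evA_def)

lemma evA_one: "evA \<iota> 1 x = 1"
  by (simp add: evA_def h1)

lemma evA_power: "evA \<iota> (a ^ n) x = evA \<iota> a x ^ n"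
  by (induction n) (simp_all add: evA_one evA_mult)

lemma evA_minus: "evA \<iota> (- a) x = - evA \<iota> a x"
  using evA_add[of a "-a" x] by (simp add: evA_def eq_neg_iff_add_eq_0 add.commute)

lemma evA_diff: "evA \<iota> (a - b) x = evA \<iota> a x - evA \<iota> b x"
  using evA_add[of a "-b" x] evA_minus[of b x] by simp

lemma evA_shift: "evA \<iota> (w + monom c d) x = evA \<iota> w x + \<iota> c * x ^ d"
  by (simp add: evA_add evA_monom)

end



fun hh :: "nat \<Rightarrow> 'b::comm_ring_1 list \<Rightarrow> 'b" where
  "hh 0 xs = 1"
| "hh (Suc m) [] = 0"
| "hh (Suc m) (x # xs) = hh (Suc m) xs + x * hh m (x # xs)"

lemma hh_single: "hh m [t] = t ^ m"
  by (induction m) simp_all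

lemma hh_diff: "hh (Suc m) (a # ys) - hh (Suc m) (b # ys) = (a - b) * hh m (a # b # ys)"
proof (induction m)
  case 0 thus ?case by simp
next
  case (Suc m)
  have "hh (Suc (Suc m)) (a # ys) - hh (Suc (Suc m)) (b # ys)
      = a * hh (Suc m) (a # ys) - b * hh (Suc m) (b # ys)" by simp
  also have "\<dots> = (a - b) * hh (Suc m) (a # ys) + b * (hh (Suc m) (a # ys) - hh (Suc m) (b # ys))"
    by (simp add: algebra_simps)
  also have "\<dots> = (a - b) * (hh (Suc m) (a # ys) + b * hh m (a # b # ys))"
    unfolding Suc.IH by (simp add: algebra_simps del: hh.simps)
  also have "hh (Suc m) (a # ys) + b * hh m (a # b # ys) = hh (Suc m) (b # ys) + a * hh m (a # b # ys)"
    using Suc.IH by (simp add: algebra_simps del: hh.simps)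
  also have "\<dots> = hh (Suc m) (a # b # ys)"
    by simp
  finally show ?case .
qed

lemma hh_swap: "hh m (x # y # xs) = hh m (y # x # xs)"
proof (induction m)
  case 0 thus ?case by simp
next
  case (Suc m)
  have "hh (Suc m) (x # y # xs) = hh (Suc m) (y # xs) + x * hh m (x # y # xs)" by simp
  moreover have "hh (Suc m) (y # x # xs) = hh (Suc m) (x # xs) + y * hh m (y # x # xs)" by simp
  moreover have "hh (Suc m) (y # xs) - hh (Suc m) (x # xs) = (y - x) * hh m (y # x # xs)"
    by (rule hh_diff)
  ultimately show ?case using Suc by (simp add: algebra_simps)
qed

lemma hh_cons_cong: "(\<And>m. hh m xs = hh m ys) \<Longrightarrow> hh m (a # xs) = hh m (a # ys)"
  by (induction m) simp_all

lemma hh_snoc: "hh m (xs @ [y]) = hh m (y # xs)"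
proof (induction xs arbitrary: m)
  case Nil thus ?case by simp
next
  case (Cons x xs)
  show ?case
  proof (induction m)
    case 0 thus ?case by simp
  next
    case (Suc m)
    have "hh (Suc m) ((x # xs) @ [y]) = hh (Suc m) (xs @ [y]) + x * hh m (x # xs @ [y])" by simp
    also have "\<dots> = hh (Suc m) (y # xs) + x * hh m (y # x # xs)"
      using Cons.IH Suc by simp
    also have "\<dots> = hh (Suc m) (y # xs) + x * hh m (x # y # xs)"
      by (simp add: hh_swap)
    also have "\<dots> = hh (Suc m) (x # y # xs)" by simp
    also have "\<dots> = hh (Suc m) (y # x # xs)" by (rule hh_swap)
    finally show ?case .
  qed
qed

lemma hh_diff_snoc: "hh (Suc m) (a # zs) - hh (Suc m) (zs @ [b]) = (a - b) * hh m (a # zs @ [b])"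
proof -
  have "hh m (a # zs @ [b]) = hh m (a # b # zs)"
    by (rule hh_cons_cong) (rule hh_snoc)
  thus ?thesis using hh_diff[of m a zs b] by (simp add: hh_snoc)
qed

context fhom begin

lemma hh_pow: "hh m (map (\<lambda>x. x ^ q) xs) = (hh m xs :: 'b) ^ q"
  using q2 by (induction m xs rule: hh.induct) (simp_all add: frob_add power_mult_distrib)

end



locale fctx = fhom \<iota> q for \<iota> :: "'a::{finite,field} \<Rightarrow> 'b::field" and q +
  fixes \<theta> :: 'b
  assumes transc: "a \<noteq> 0 \<Longrightarrow> evA \<iota> a \<theta> \<noteq> 0"
begin

definition Ys :: "nat \<Rightarrow> 'b list" where "Ys n = map (\<lambda>i. \<theta> ^ (q ^ i)) [0..<n]"
definition Zs :: "nat \<Rightarrow> 'b list" where "Zs d = map (\<lambda>i. \<theta> ^ (q ^ i)) [1..<Suc d]"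
definition H :: "nat \<Rightarrow> nat \<Rightarrow> 'b" where "H d m = hh m (Ys (Suc d))"
definition lL :: "nat \<Rightarrow> 'b" where "lL d = (\<Prod>i<d. \<theta> - \<theta> ^ (q ^ Suc i))"

fun ee :: "nat \<Rightarrow> 'b \<Rightarrow> 'b" where
  "ee 0 x = x"
| "ee (Suc d) x = P (ee d x / ee d (\<theta> ^ d))"

definition EE :: "nat \<Rightarrow> 'b" where "EE d = ee d (\<theta> ^ d)"

fun al :: "nat \<Rightarrow> 'b" where
  "al 0 = 1"
| "al (Suc d) = - al d / EE d"

lemma Ys_Suc: "Ys (Suc d) = \<theta> # Zs d"
  by (simp add: Ys_def Zs_def upt_conv_Cons map_Suc_upt[symmetric] del: upt_Suc)

lemma Zs_alt: "Zs d = map (\<lambda>i. \<theta> ^ (q ^ Suc i)) [0..<d]"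
proof -
  have "[1..<Suc d] = map Suc [0..<d]" using map_Suc_upt[of 0 d] by simp
  thus ?thesis unfolding Zs_def by simp
qed

lemma Ys_pow: "map (\<lambda>x. x ^ q) (Ys (Suc d)) = Zs d @ [\<theta> ^ (q ^ Suc d)]"
proof -
  have "map (\<lambda>x. x ^ q) (Ys (Suc d)) = map (\<lambda>i. \<theta> ^ (q ^ Suc i)) [0..<Suc d]"
    unfolding Ys_def map_map comp_def
    by (rule map_cong[OF refl]) (simp add: power_mult[symmetric] mult.commute)
  also have "\<dots> = Zs d @ [\<theta> ^ (q ^ Suc d)]"
  proof -
    have u: "[0..<Suc d] = [0..<d] @ [d]" by simp
    show ?thesis unfolding Zs_alt u by (simp only: map_append list.map)
  qed
  finally show ?thesis .
qed

lemma Zs_Suc: "Zs (Suc d) = Zs d @ [\<theta> ^ (q ^ Suc d)]"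
proof -
  have u: "[0..<Suc d] = [0..<d] @ [d]" by simp
  show ?thesis unfolding Zs_alt u by (simp only: map_append list.map)
qed

lemma Ys_SucSuc: "Ys (Suc (Suc d)) = \<theta> # Zs d @ [\<theta> ^ (q ^ Suc d)]"
  by (simp only: Ys_Suc Zs_Suc)

lemma H_0[simp]: "H d 0 = 1" by (simp add: H_def)

lemma H_step: "H d (Suc m) - H d (Suc m) ^ q = (\<theta> - \<theta> ^ (q ^ Suc d)) * H (Suc d) m"
proof -
  have "H d (Suc m) ^ q = hh (Suc m) (Zs d @ [\<theta> ^ (q ^ Suc d)])"
    unfolding H_def by (simp add: hh_pow[symmetric] Ys_pow del: hh.simps)
  moreover have "H d (Suc m) = hh (Suc m) (\<theta> # Zs d)" by (simp add: H_def Ys_Suc del: hh.simps)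
  ultimately show ?thesis using hh_diff_snoc[of m \<theta> "Zs d" "\<theta> ^ (q ^ Suc d)"]
    by (simp add: H_def Ys_SucSuc del: hh.simps)
qed

lemma lL_Suc: "lL (Suc d) = lL d * (\<theta> - \<theta> ^ (q ^ Suc d))"
  by (simp add: lL_def)

lemma X_pow_coeff1: "n \<noteq> 1 \<Longrightarrow> coeff ([:0,1:] ^ n :: 'a poly) 1 = 0"
  by (simp add: monom_altdef[of 1 n, simplified, symmetric] coeff_monom)

lemma theta_diff_nz: "\<theta> - \<theta> ^ (q ^ Suc i) \<noteq> 0"
proof -
  have q1: "q ^ Suc i \<noteq> 1" using q2 by (metis One_nat_def less_not_refl2 nat_less_le one_less_power zero_less_Suc less_trans one_less_numeral_iff semiring_norm(76))
  have "([:0,1:] - [:0,1:] ^ (q ^ Suc i) :: 'a poly) \<noteq> 0"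
  proof
    assume "([:0,1:] - [:0,1:] ^ (q ^ Suc i) :: 'a poly) = 0"
    hence "coeff ([:0,1:] - [:0,1:] ^ (q ^ Suc i) :: 'a poly) 1 = 0" by simp
    thus False using X_pow_coeff1[OF q1] by simp
  qed
  from transc[OF this] show ?thesis by (simp add: evA_diff evA_power evA_X)
qed

lemma lL_nz: "lL d \<noteq> 0"
  unfolding lL_def using theta_diff_nz by (simp add: prod_zero_iff)

lemma ee_formula: "al d \<noteq> 0 \<and> (\<forall>j\<ge>d. ee d (\<theta> ^ j) = al d * lL d * H d (j - d))"
proof (induction d)
  case 0 thus ?case by (simp add: lL_def H_def Ys_def hh_single)
next
  case (Suc d)
  have E: "EE d = al d * lL d" using Suc by (simp add: EE_def)
  have Enz: "EE d \<noteq> 0" using E Suc lL_nz by simp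
  have alnz: "al (Suc d) \<noteq> 0" using Suc Enz by simp
  have "ee (Suc d) (\<theta> ^ j) = al (Suc d) * lL (Suc d) * H (Suc d) (j - Suc d)" if j: "j \<ge> Suc d" for j
  proof -
    obtain m where m: "j - d = Suc m" "j - Suc d = m" using j by (metis Suc_diff_Suc Suc_le_lessD diff_Suc_Suc)
    have "ee d (\<theta> ^ j) / EE d = H d (Suc m)"
      using Suc j E Enz m lL_nz by simp
    hence "ee (Suc d) (\<theta> ^ j) = P (H d (Suc m))" by (simp add: EE_def)
    also have "\<dots> = - ((\<theta> - \<theta> ^ (q ^ Suc d)) * H (Suc d) m)"
      using H_step[of d m] unfolding P_eq by (metis minus_diff_eq)
    also have "\<dots> = al (Suc d) * lL (Suc d) * H (Suc d) (j - Suc d)"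
      using E Enz Suc m by (simp add: lL_Suc field_simps)
    finally show ?thesis .
  qed
  thus ?case using alnz by blast
qed

lemma EE_eq: "EE d = al d * lL d"
  using ee_formula[of d] by (simp add: EE_def)

lemma al_nz: "al d \<noteq> 0" using ee_formula by blast

lemma EE_nz: "EE d \<noteq> 0" using EE_eq al_nz lL_nz by simp

lemma ee_ratio: "j \<ge> d \<Longrightarrow> ee d (\<theta> ^ j) / EE d = H d (j - d)"
  using ee_formula[of d] EE_eq al_nz lL_nz by simp

lemma ee_add: "ee d (x + y) = ee d x + ee d y"
  by (induction d arbitrary: x y) (simp_all add: add_divide_distrib P_add)

lemma ee_smult: "ee d (\<iota> c * x) = \<iota> c * ee d x"
proof (induction d arbitrary: x)
  case (Suc d)
  have "ee (Suc d) (\<iota> c * x) = P (\<iota> c * (ee d x / ee d (\<theta> ^ d)))"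
    using Suc by simp
  also have "\<dots> = \<iota> c * ee (Suc d) x" by (simp only: P_smult ee.simps)
  finally show ?case .
qed simp

end



lemma alg3:
  fixes al la m n s T k e E u :: "'b::field"
  assumes "u \<noteq> 0" "E \<noteq> 0" "s * E = u - e" "T = n + k * E"
  shows "(la * al / u - al^2 * (m + s * n) / u^2) + s * T * (al / u)^2
     = (la * al + al^2 * k) / u - al^2 * (k * e + m) / u^2"
proof -
  have s: "s = (u - e) / E" using assms by (simp add: field_simps)
  show ?thesis unfolding s assms(4) using assms(1,2) by (simp add: field_simps power2_eq_square)
qed

lemma alg4:
  fixes al la1 la2 m1 m2 n1 n2 s T1 T2 k1 k2 e E u :: "'b::field"
  assumes "u \<noteq> 0" "E \<noteq> 0" "s * E = u - e" "T1 = n1 + k1 * E" "T2 = n2 + k2 * E"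
  shows "(al^2 * (m1 + s * n1) * (m2 + s * n2) / u^2 - al * (la1 * (m2 + s * n2) + la2 * (m1 + s * n1)) / u)
     + s * T1 * (la2 * al / u - al^2 * (m2 + s * n2) / u^2)
     + s * T2 * (la1 * al / u - al^2 * (m1 + s * n1) / u^2)
     + s^2 * T1 * T2 * (al / u)^2
   = (al^2 * k1 * k2 + al * (la1 * k2 + la2 * k1))
     + (- al * ((la1 + al * k1) * (m2 + k2 * e) + (la2 + al * k2) * (m1 + k1 * e)))  / u
     + al^2 * (m1 + k1 * e) * (m2 + k2 * e) / u^2"
proof -
  have s: "s = (u - e) / E" using assms by (simp add: field_simps)
  show ?thesis unfolding s assms(4,5) using assms(1,2) by (simp add: field_simps power2_eq_square)
qed

context fctx begin

lemma evA_zero: "evA \<iota> 0 y = 0" by (simp add: evA_def)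

lemma comb_sum: assumes "P z \<noteq> 0" "E \<noteq> 0"
  shows "(\<Sum>c\<in>UNIV. K + A / (E * (z + \<iota> c)) + B / (E * (z + \<iota> c))^2) = - A / (E * P z) + B / (E^2 * (P z)^2)"
proof -
  have "(\<Sum>c\<in>UNIV. K + A / (E * (z + \<iota> c)) + B / (E * (z + \<iota> c))^2)
      = K * (\<Sum>c\<in>(UNIV::'a set). 1) + (A / E) * (\<Sum>c\<in>UNIV. 1 / (z + \<iota> c)) + (B / E^2) * (\<Sum>c\<in>UNIV. 1 / (z + \<iota> c)^2)"
    by (simp add: sum.distrib sum_distrib_left power_mult_distrib)
  also have "\<dots> = - A / (E * P z) + B / (E^2 * (P z)^2)"
    using sum_one sum_inv1'[OF assms(1)] sum_inv2'[OF assms(1)] by simp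
  finally show ?thesis .
qed

lemma ee_shift: "ee d (x + \<iota> c * \<theta> ^ d) = ee d x + \<iota> c * EE d"
  by (simp add: ee_add ee_smult EE_def)

lemma step_nz: assumes "ee (Suc d) x \<noteq> 0"
  shows "P (ee d x / EE d) \<noteq> 0" "ee d (x + \<iota> c * \<theta> ^ d) \<noteq> 0"
    "ee d (x + \<iota> c * \<theta> ^ d) = EE d * (ee d x / EE d + \<iota> c)"
proof -
  show P: "P (ee d x / EE d) \<noteq> 0" using assms by (simp add: EE_def)
  show eq: "ee d (x + \<iota> c * \<theta> ^ d) = EE d * (ee d x / EE d + \<iota> c)"
    using EE_nz[of d] by (simp add: ee_shift field_simps)
  have "ee d x / EE d + \<iota> c \<noteq> 0"
  proof
    assume "ee d x / EE d + \<iota> c = 0"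
    hence "ee d x / EE d = \<iota> (- c)" by (simp add: eq_neg_iff_add_eq_0)
    hence "P (ee d x / EE d) = 0" using P_zero_iff by blast
    thus False using P by simp
  qed
  thus "ee d (x + \<iota> c * \<theta> ^ d) \<noteq> 0" using eq EE_nz[of d] by simp
qed

lemma S12: "ee d x \<noteq> 0 \<Longrightarrow>
   (\<Sum>v\<in>Vs d. 1 / (x + evA \<iota> v \<theta>)) = al d / ee d x \<and>
   (\<Sum>v\<in>Vs d. 1 / (x + evA \<iota> v \<theta>)^2) = (al d / ee d x)^2"
proof (induction d arbitrary: x)
  case 0 thus ?case by (simp add: Vs_0 evA_zero power_one_over)
next
  case (Suc d)
  define E where "E = EE d"
  define z where "z = ee d x / E"
  have Pz: "P z \<noteq> 0" and E0: "E \<noteq> 0" using step_nz(1)[OF Suc.prems] EE_nz by (auto simp: z_def E_def)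
  have eS: "ee (Suc d) x = P z" by (simp add: z_def E_def EE_def)
  have IH: "(\<Sum>w\<in>Vs d. 1 / ((x + \<iota> c * \<theta> ^ d) + evA \<iota> w \<theta>)) = al d / (E * (z + \<iota> c)) \<and>
        (\<Sum>w\<in>Vs d. 1 / ((x + \<iota> c * \<theta> ^ d) + evA \<iota> w \<theta>)^2) = (al d / (E * (z + \<iota> c)))^2" for c
    using Suc.IH[OF step_nz(2)[OF Suc.prems, of c]] step_nz(3)[OF Suc.prems, of c] by (simp add: z_def E_def)
  have r: "x + evA \<iota> (w + monom c d) \<theta> = (x + \<iota> c * \<theta> ^ d) + evA \<iota> w \<theta>" for w c
    by (simp add: evA_shift algebra_simps)
  have "(\<Sum>v\<in>Vs (Suc d). 1 / (x + evA \<iota> v \<theta>)) = (\<Sum>c\<in>UNIV. al d / (E * (z + \<iota> c)))"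
    unfolding sum_Vs_Suc r using IH by simp
  also have "\<dots> = (\<Sum>c\<in>UNIV. 0 + (al d) / (E * (z + \<iota> c)) + 0 / (E * (z + \<iota> c))^2)" by simp
  also have "\<dots> = al (Suc d) / ee (Suc d) x"
    unfolding comb_sum[OF Pz E0] eS by (simp add: E_def)
  finally have A: "(\<Sum>v\<in>Vs (Suc d). 1 / (x + evA \<iota> v \<theta>)) = al (Suc d) / ee (Suc d) x" .
  have "(\<Sum>v\<in>Vs (Suc d). 1 / (x + evA \<iota> v \<theta>)^2) = (\<Sum>c\<in>UNIV. (al d / (E * (z + \<iota> c)))^2)"
    unfolding sum_Vs_Suc r using IH by simp
  also have "\<dots> = (\<Sum>c\<in>UNIV. 0 + 0 / (E * (z + \<iota> c)) + (al d)^2 / (E * (z + \<iota> c))^2)"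
    by (simp add: power_divide)
  also have "\<dots> = (al (Suc d) / ee (Suc d) x)^2"
    unfolding comb_sum[OF Pz E0] eS by (simp add: E_def power_divide power_mult_distrib)
  finally show ?case using A by simp
qed

end



context fctx begin

fun ll :: "'b \<Rightarrow> nat \<Rightarrow> 'b \<Rightarrow> 'b" where
  "ll t 0 x = 0"
| "ll t (Suc d) x = ll t d x + (t ^ d - ll t d (\<theta> ^ d)) / EE d * ee d x"

definition kap :: "'b \<Rightarrow> nat \<Rightarrow> 'b" where "kap t d = (t ^ d - ll t d (\<theta> ^ d)) / EE d"

fun la :: "'b \<Rightarrow> nat \<Rightarrow> 'b" where
  "la t 0 = 0"
| "la t (Suc d) = la t d + al d * kap t d"

lemma ll_Suc': "ll t (Suc d) x = ll t d x + kap t d * ee d x"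
  by (simp add: kap_def)

lemma ll_add: "ll t d (x + y) = ll t d x + ll t d y"
proof (induction d arbitrary: x y)
  case (Suc d) thus ?case by (simp only: ll_Suc' ee_add) (simp add: algebra_simps)
qed simp

lemma ll_smult: "ll t d (\<iota> c * x) = \<iota> c * ll t d x"
proof (induction d arbitrary: x)
  case (Suc d) thus ?case by (simp only: ll_Suc' ee_smult) (simp add: algebra_simps)
qed simp

lemma ll_shift: "ll t d (x + \<iota> c * \<theta> ^ d) = ll t d x + \<iota> c * ll t d (\<theta> ^ d)"
  by (simp add: ll_add ll_smult)

lemma kap_T: "t ^ d = ll t d (\<theta> ^ d) + kap t d * EE d"
  using EE_nz[of d] by (simp add: kap_def)

lemma S3: "ee d x \<noteq> 0 \<Longrightarrow>
   (\<Sum>v\<in>Vs d. evA \<iota> v t / (x + evA \<iota> v \<theta>)^2) = la t d * al d / ee d x - (al d)^2 * ll t d x / (ee d x)^2"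
proof (induction d arbitrary: x)
  case 0 thus ?case by (simp add: Vs_0 evA_zero)
next
  case (Suc d)
  define E where "E = EE d"
  define z where "z = ee d x / E"
  define e where "e = ee d x"
  define m where "m = ll t d x"
  define n where "n = ll t d (\<theta> ^ d)"
  define k where "k = kap t d"
  define alp where "alp = al d"
  define lam where "lam = la t d"
  have Pz: "P z \<noteq> 0" and E0: "E \<noteq> 0" using step_nz(1)[OF Suc.prems] EE_nz by (auto simp: z_def E_def)
  have eS: "ee (Suc d) x = P z" by (simp add: z_def E_def EE_def)
  have u: "ee d (x + \<iota> c * \<theta> ^ d) = E * (z + \<iota> c)" for c
    using step_nz(3)[OF Suc.prems] by (simp add: z_def E_def)
  have unz: "E * (z + \<iota> c) \<noteq> 0" for c using step_nz(2)[OF Suc.prems] u by metis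
  have r: "x + evA \<iota> (w + monom c d) \<theta> = (x + \<iota> c * \<theta> ^ d) + evA \<iota> w \<theta>" for w c
    by (simp add: evA_shift algebra_simps)
  have inner: "(\<Sum>w\<in>Vs d. evA \<iota> (w + monom c d) t / ((x + \<iota> c * \<theta> ^ d) + evA \<iota> w \<theta>)^2)
     = 0 + (lam * alp + alp^2 * k) / (E * (z + \<iota> c)) + (- (alp^2 * (k * e + m))) / (E * (z + \<iota> c))^2" for c
  proof -
    have "(\<Sum>w\<in>Vs d. evA \<iota> (w + monom c d) t / ((x + \<iota> c * \<theta> ^ d) + evA \<iota> w \<theta>)^2)
      = (\<Sum>w\<in>Vs d. evA \<iota> w t / ((x + \<iota> c * \<theta> ^ d) + evA \<iota> w \<theta>)^2)
        + \<iota> c * t ^ d * (\<Sum>w\<in>Vs d. 1 / ((x + \<iota> c * \<theta> ^ d) + evA \<iota> w \<theta>)^2)"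
      by (simp add: evA_shift add_divide_distrib sum.distrib sum_distrib_left)
    also have "\<dots> = (lam * alp / (E * (z + \<iota> c)) - alp^2 * (m + \<iota> c * n) / (E * (z + \<iota> c))^2)
         + \<iota> c * t ^ d * (alp / (E * (z + \<iota> c)))^2"
      using Suc.IH[OF step_nz(2)[OF Suc.prems, of c]] S12[OF step_nz(2)[OF Suc.prems, of c]]
      unfolding u ll_shift by (simp add: m_def n_def alp_def lam_def)
    also have "\<dots> = (lam * alp + alp^2 * k) / (E * (z + \<iota> c)) - alp^2 * (k * e + m) / (E * (z + \<iota> c))^2"
      by (rule alg3[OF unz E0]) (use E0 kap_T[of t d] in \<open>auto simp: z_def e_def E_def k_def n_def algebra_simps\<close>)
    finally show ?thesis by simp
  qed
  have "(\<Sum>v\<in>Vs (Suc d). evA \<iota> v t / (x + evA \<iota> v \<theta>)^2)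
     = (\<Sum>c\<in>UNIV. 0 + (lam * alp + alp^2 * k) / (E * (z + \<iota> c)) + (- (alp^2 * (k * e + m))) / (E * (z + \<iota> c))^2)"
    unfolding sum_Vs_Suc r inner ..
  also have "\<dots> = - (lam * alp + alp^2 * k) / (E * P z) + (- (alp^2 * (k * e + m))) / (E^2 * (P z)^2)"
    by (rule comb_sum[OF Pz E0])
  also have "\<dots> = la t (Suc d) * al (Suc d) / ee (Suc d) x - (al (Suc d))^2 * ll t (Suc d) x / (ee (Suc d) x)^2"
    unfolding eS using E0 Pz
    by (simp add: ll_Suc' lam_def alp_def k_def E_def m_def e_def field_simps power2_eq_square kap_T[of t d])
  finally show ?case .
qed

lemma expand4: fixes w1 w2 a b D :: 'b
  shows "(w1 + a) * (w2 + b) / D = w1 * w2 / D + a * (w2 / D) + b * (w1 / D) + a * b * (1 / D)"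
  by (simp add: divide_inverse algebra_simps)

lemma S4: "ee d x \<noteq> 0 \<Longrightarrow>
   (\<Sum>v\<in>Vs d. evA \<iota> v t1 * evA \<iota> v t2 / (x + evA \<iota> v \<theta>)^2)
     = (al d)^2 * ll t1 d x * ll t2 d x / (ee d x)^2
       - al d * (la t1 d * ll t2 d x + la t2 d * ll t1 d x) / ee d x"
proof (induction d arbitrary: x)
  case 0 thus ?case by (simp add: Vs_0 evA_zero)
next
  case (Suc d)
  define E where "E = EE d"
  define z where "z = ee d x / E"
  define e where "e = ee d x"
  define m1 where "m1 = ll t1 d x"
  define n1 where "n1 = ll t1 d (\<theta> ^ d)"
  define k1 where "k1 = kap t1 d"
  define m2 where "m2 = ll t2 d x"
  define n2 where "n2 = ll t2 d (\<theta> ^ d)"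
  define k2 where "k2 = kap t2 d"
  define alp where "alp = al d"
  define lam1 where "lam1 = la t1 d"
  define lam2 where "lam2 = la t2 d"
  have Pz: "P z \<noteq> 0" and E0: "E \<noteq> 0" using step_nz(1)[OF Suc.prems] EE_nz by (auto simp: z_def E_def)
  have eS: "ee (Suc d) x = P z" by (simp add: z_def E_def EE_def)
  have u: "ee d (x + \<iota> c * \<theta> ^ d) = E * (z + \<iota> c)" for c
    using step_nz(3)[OF Suc.prems] by (simp add: z_def E_def)
  have unz: "E * (z + \<iota> c) \<noteq> 0" for c using step_nz(2)[OF Suc.prems] u by metis
  have r: "x + evA \<iota> (w + monom c d) \<theta> = (x + \<iota> c * \<theta> ^ d) + evA \<iota> w \<theta>" for w c
    by (simp add: evA_shift algebra_simps)
  define K where "K = alp^2 * k1 * k2 + alp * (lam1 * k2 + lam2 * k1)"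
  define A where "A = - alp * ((lam1 + alp * k1) * (m2 + k2 * e) + (lam2 + alp * k2) * (m1 + k1 * e))"
  define B where "B = alp^2 * (m1 + k1 * e) * (m2 + k2 * e)"
  have inner: "(\<Sum>w\<in>Vs d. evA \<iota> (w + monom c d) t1 * evA \<iota> (w + monom c d) t2 / ((x + \<iota> c * \<theta> ^ d) + evA \<iota> w \<theta>)^2)
     = K + A / (E * (z + \<iota> c)) + B / (E * (z + \<iota> c))^2" for c
  proof -
    let ?y = "x + \<iota> c * \<theta> ^ d"
    have "(\<Sum>w\<in>Vs d. evA \<iota> (w + monom c d) t1 * evA \<iota> (w + monom c d) t2 / (?y + evA \<iota> w \<theta>)^2)
      = (\<Sum>w\<in>Vs d. evA \<iota> w t1 * evA \<iota> w t2 / (?y + evA \<iota> w \<theta>)^2)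
        + \<iota> c * t1 ^ d * (\<Sum>w\<in>Vs d. evA \<iota> w t2 / (?y + evA \<iota> w \<theta>)^2)
        + \<iota> c * t2 ^ d * (\<Sum>w\<in>Vs d. evA \<iota> w t1 / (?y + evA \<iota> w \<theta>)^2)
        + (\<iota> c)^2 * t1 ^ d * t2 ^ d * (\<Sum>w\<in>Vs d. 1 / (?y + evA \<iota> w \<theta>)^2)"
      by (simp only: evA_shift expand4 sum.distrib sum_distrib_left[symmetric])
         (simp add: power2_eq_square algebra_simps)
    also have "\<dots> = (alp^2 * (m1 + \<iota> c * n1) * (m2 + \<iota> c * n2) / (E * (z + \<iota> c))^2
          - alp * (lam1 * (m2 + \<iota> c * n2) + lam2 * (m1 + \<iota> c * n1)) / (E * (z + \<iota> c)))
         + \<iota> c * t1 ^ d * (lam2 * alp / (E * (z + \<iota> c)) - alp^2 * (m2 + \<iota> c * n2) / (E * (z + \<iota> c))^2)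
         + \<iota> c * t2 ^ d * (lam1 * alp / (E * (z + \<iota> c)) - alp^2 * (m1 + \<iota> c * n1) / (E * (z + \<iota> c))^2)
         + (\<iota> c)^2 * t1 ^ d * t2 ^ d * (alp / (E * (z + \<iota> c)))^2"
      using Suc.IH[OF step_nz(2)[OF Suc.prems, of c]] S12[OF step_nz(2)[OF Suc.prems, of c]]
        S3[OF step_nz(2)[OF Suc.prems, of c], of t1] S3[OF step_nz(2)[OF Suc.prems, of c], of t2]
      unfolding u ll_shift by (simp add: m1_def n1_def m2_def n2_def alp_def lam1_def lam2_def)
    also have "\<dots> = K + A / (E * (z + \<iota> c)) + B / (E * (z + \<iota> c))^2"
      unfolding K_def A_def B_def
      by (rule alg4[OF unz E0])
        (use E0 kap_T[of t1 d] kap_T[of t2 d] in \<open>auto simp: z_def e_def E_def k1_def n1_def k2_def n2_def algebra_simps\<close>)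
    finally show ?thesis .
  qed
  have "(\<Sum>v\<in>Vs (Suc d). evA \<iota> v t1 * evA \<iota> v t2 / (x + evA \<iota> v \<theta>)^2)
     = (\<Sum>c\<in>UNIV. K + A / (E * (z + \<iota> c)) + B / (E * (z + \<iota> c))^2)"
    unfolding sum_Vs_Suc r inner ..
  also have "\<dots> = - A / (E * P z) + B / (E^2 * (P z)^2)"
    by (rule comb_sum[OF Pz E0])
  also have "\<dots> = (al (Suc d))^2 * ll t1 (Suc d) x * ll t2 (Suc d) x / (ee (Suc d) x)^2
       - al (Suc d) * (la t1 (Suc d) * ll t2 (Suc d) x + la t2 (Suc d) * ll t1 (Suc d) x) / ee (Suc d) x"
    unfolding eS A_def B_def using E0 Pz
    by (simp del: ll.simps(2) add: ll_Suc' lam1_def lam2_def alp_def k1_def k2_def E_def m1_def m2_def e_def field_simps power2_eq_square)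
  finally show ?case .
qed

end



context fctx begin

lemma bcar_Suc: "bcar q (Suc i) t \<theta> = bcar q i t \<theta> * (t - \<theta> ^ (q ^ i))"
  by (simp add: bcar_def)

lemma bcar_0: "bcar q 0 t \<theta> = 1" by (simp add: bcar_def)

lemma Ys_Suc_snoc: "Ys (Suc i) = Ys i @ [\<theta> ^ (q ^ i)]"
  by (simp add: Ys_def)

lemma newton_gen: "bcar q i t \<theta> * hh m (t # Ys i) = (\<Sum>k = i..i + m. bcar q k t \<theta> * H k (i + m - k))"
proof (induction m arbitrary: i)
  case 0 thus ?case by simp
next
  case (Suc m)
  let ?X = "\<theta> ^ (q ^ i)"
  have "hh (Suc m) (t # Ys i) - hh (Suc m) (?X # Ys i) = (t - ?X) * hh m (t # ?X # Ys i)"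
    by (rule hh_diff)
  moreover have "hh (Suc m) (?X # Ys i) = H i (Suc m)"
    by (simp only: H_def Ys_Suc_snoc hh_snoc)
  moreover have "hh m (t # ?X # Ys i) = hh m (t # Ys (Suc i))"
    unfolding Ys_Suc_snoc by (rule hh_cons_cong) (simp only: hh_snoc)
  ultimately have e: "hh (Suc m) (t # Ys i) = H i (Suc m) + (t - ?X) * hh m (t # Ys (Suc i))"
    by (simp add: algebra_simps)
  have "bcar q i t \<theta> * hh (Suc m) (t # Ys i) = bcar q i t \<theta> * H i (Suc m) + bcar q (Suc i) t \<theta> * hh m (t # Ys (Suc i))"
    unfolding e bcar_Suc by (simp add: algebra_simps)
  also have "\<dots> = bcar q i t \<theta> * H i (i + Suc m - i) + (\<Sum>k = Suc i..i + Suc m. bcar q k t \<theta> * H k (i + Suc m - k))"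
    using Suc.IH[of "Suc i"] by simp
  also have "\<dots> = (\<Sum>k = i..i + Suc m. bcar q k t \<theta> * H k (i + Suc m - k))"
    by (subst sum.atLeast_Suc_atMost[of i]) simp_all
  finally show ?case .
qed

lemma newton: "t ^ n = (\<Sum>k = 0..n. bcar q k t \<theta> * H k (n - k))"
  using newton_gen[where i=0 and m=n and t=t] by (simp add: bcar_0 Ys_def hh_single)

lemma newton': "t ^ d - (\<Sum>i<d. bcar q i t \<theta> * H i (d - i)) = bcar q d t \<theta>"
proof -
  have "t ^ d = (\<Sum>i<d. bcar q i t \<theta> * H i (d - i)) + bcar q d t \<theta> * H d (d - d)"
    unfolding newton[of t d] by (simp add: atLeast0AtMost lessThan_Suc_atMost[symmetric])
  thus ?thesis by simp
qed

lemma ll_formula: "j \<ge> d \<Longrightarrow> ll t d (\<theta> ^ j) = (\<Sum>i<d. bcar q i t \<theta> * H i (j - i))"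
proof (induction d arbitrary: j)
  case 0 thus ?case by simp
next
  case (Suc d)
  have k: "kap t d = bcar q d t \<theta> / EE d"
    using Suc.IH[of d] newton'[of t d] by (simp add: kap_def)
  have "kap t d * ee d (\<theta> ^ j) = bcar q d t \<theta> * (ee d (\<theta> ^ j) / EE d)"
    unfolding k by simp
  also have "\<dots> = bcar q d t \<theta> * H d (j - d)"
    using ee_ratio[of d j] Suc.prems by simp
  finally have "kap t d * ee d (\<theta> ^ j) = bcar q d t \<theta> * H d (j - d)" .
  thus ?case using Suc by (simp del: ll.simps(2) add: ll_Suc')
qed

lemma kap_eq: "kap t d = bcar q d t \<theta> / EE d"
  using ll_formula[of d d t] newton'[of t d] by (simp add: kap_def)

lemma la_formula: "la t d * (t - \<theta>) * lL d = bcar q d t \<theta> * (\<theta> - \<theta> ^ (q ^ d))"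
proof (induction d)
  case 0 thus ?case by (simp add: bcar_0)
next
  case (Suc d)
  have la: "la t (Suc d) = la t d + bcar q d t \<theta> / lL d"
    using EE_eq[of d] al_nz[of d] by (simp add: kap_eq)
  have "la t (Suc d) * (t - \<theta>) * lL (Suc d)
     = (la t d * (t - \<theta>) * lL d + bcar q d t \<theta> * (t - \<theta>)) * (\<theta> - \<theta> ^ (q ^ Suc d))"
    unfolding la lL_Suc using lL_nz[of d] by (simp add: field_simps)
  also have "\<dots> = bcar q (Suc d) t \<theta> * (\<theta> - \<theta> ^ (q ^ Suc d))"
    unfolding Suc bcar_Suc by (simp add: algebra_simps)
  finally show ?case .
qed

lemma lcar_eval: "evA \<iota> (lcar d) \<theta> = lL d"
proof (induction d)
  case 0 thus ?case by (simp add: lL_def evA_one)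
next
  case (Suc d)
  have qd: "card (UNIV :: 'a set) = q" using q_def by simp
  show ?case by (simp add: qd evA_mult evA_diff evA_power evA_X Suc lL_Suc)
qed

lemma sum_Aplus_eval: "(\<Sum>a\<in>Aplus d. F (evA \<iota> a t) (evA \<iota> a \<theta>)) = (\<Sum>v\<in>Vs d. F (t ^ d + evA \<iota> v t) (\<theta> ^ d + evA \<iota> v \<theta>))"
  by (simp add: sum_Aplus evA_add evA_monom h1)

lemma main1: assumes "t \<noteq> \<theta>"
  shows "(\<Sum>a\<in>Aplus d. evA \<iota> a t / (evA \<iota> a \<theta>)^2)
     = bcar q d t \<theta> * (t - \<theta> ^ (q ^ d)) / ((t - \<theta>) * (evA \<iota> (lcar d) \<theta>)^2)"
proof -
  have x: "ee d (\<theta> ^ d) \<noteq> 0" using EE_nz by (simp add: EE_def)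
  have "(\<Sum>a\<in>Aplus d. evA \<iota> a t / (evA \<iota> a \<theta>)^2)
     = (\<Sum>v\<in>Vs d. (t ^ d + evA \<iota> v t) / (\<theta> ^ d + evA \<iota> v \<theta>)^2)"
    by (rule sum_Aplus_eval)
  also have "\<dots> = t ^ d * (\<Sum>v\<in>Vs d. 1 / (\<theta> ^ d + evA \<iota> v \<theta>)^2) + (\<Sum>v\<in>Vs d. evA \<iota> v t / (\<theta> ^ d + evA \<iota> v \<theta>)^2)"
    by (simp add: add_divide_distrib sum.distrib sum_distrib_left)
  also have "\<dots> = t ^ d * (al d / EE d)^2 + (la t d * al d / EE d - (al d)^2 * ll t d (\<theta> ^ d) / (EE d)^2)"
    using S12[OF x] S3[OF x, of t] by (simp add: EE_def)
  also have "\<dots> = bcar q d t \<theta> / (lL d)^2 + la t d / lL d"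
  proof -
    have "t ^ d - ll t d (\<theta> ^ d) = bcar q d t \<theta>"
      using kap_T[of t d] kap_eq[of t d] EE_nz[of d] by (simp add: algebra_simps)
    moreover have "al d / EE d = 1 / lL d" using EE_eq[of d] al_nz[of d] by simp
    ultimately show ?thesis using EE_nz[of d] lL_nz[of d] al_nz[of d] EE_eq[of d]
      by (simp add: field_simps power2_eq_square)
  qed
  also have "\<dots> = bcar q d t \<theta> * (t - \<theta> ^ (q ^ d)) / ((t - \<theta>) * (lL d)^2)"
  proof -
    have t0: "t - \<theta> \<noteq> 0" using assms by simp
    have "bcar q d t \<theta> / (lL d)^2 + la t d / lL d
        = (bcar q d t \<theta> * (t - \<theta>) + la t d * (t - \<theta>) * lL d) / ((t - \<theta>) * (lL d)^2)"
      using t0 lL_nz[of d] by (simp add: field_simps power2_eq_square)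
    also have "\<dots> = (bcar q d t \<theta> * (t - \<theta>) + bcar q d t \<theta> * (\<theta> - \<theta> ^ (q ^ d))) / ((t - \<theta>) * (lL d)^2)"
      by (simp only: la_formula)
    also have "\<dots> = bcar q d t \<theta> * (t - \<theta> ^ (q ^ d)) / ((t - \<theta>) * (lL d)^2)"
      by (simp add: algebra_simps)
    finally show ?thesis .
  qed
  finally show ?thesis by (simp add: lcar_eval)
qed

lemma main2: assumes "t1 \<noteq> \<theta>" "t2 \<noteq> \<theta>"
  shows "(\<Sum>a\<in>Aplus d. evA \<iota> a t1 * evA \<iota> a t2 / (evA \<iota> a \<theta>)^2)
     = bcar q d t1 \<theta> * bcar q d t2 \<theta> / ((t1 - \<theta>) * (t2 - \<theta>) * (evA \<iota> (lcar d) \<theta>)^2)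
        * ((t1 - \<theta>) * (t2 - \<theta>) + (t1 - \<theta>) * (\<theta> - \<theta> ^ (q ^ d)) + (t2 - \<theta>) * (\<theta> - \<theta> ^ (q ^ d)))"
proof -
  have x: "ee d (\<theta> ^ d) \<noteq> 0" using EE_nz by (simp add: EE_def)
  define D where "D v = (\<theta> ^ d + evA \<iota> v \<theta>)^2" for v
  define l where "l = lL d"
  define b1 where "b1 = bcar q d t1 \<theta>"
  define b2 where "b2 = bcar q d t2 \<theta>"
  define n1 where "n1 = ll t1 d (\<theta> ^ d)"
  define n2 where "n2 = ll t2 d (\<theta> ^ d)"
  have l0: "l \<noteq> 0" using lL_nz by (simp add: l_def)
  have r: "al d / EE d = 1 / l" using EE_eq[of d] al_nz[of d] by (simp add: l_def)
  have T1: "t1 ^ d = n1 + b1" using kap_T[of t1 d] kap_eq[of t1 d] EE_nz[of d] by (simp add: n1_def b1_def)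
  have T2: "t2 ^ d = n2 + b2" using kap_T[of t2 d] kap_eq[of t2 d] EE_nz[of d] by (simp add: n2_def b2_def)
  have "(\<Sum>a\<in>Aplus d. evA \<iota> a t1 * evA \<iota> a t2 / (evA \<iota> a \<theta>)^2)
     = (\<Sum>v\<in>Vs d. (evA \<iota> v t1 + t1 ^ d) * (evA \<iota> v t2 + t2 ^ d) / D v)"
    by (simp add: sum_Aplus evA_add evA_monom h1 D_def add.commute)
  also have "\<dots> = (\<Sum>v\<in>Vs d. evA \<iota> v t1 * evA \<iota> v t2 / D v) + t1 ^ d * (\<Sum>v\<in>Vs d. evA \<iota> v t2 / D v)
      + t2 ^ d * (\<Sum>v\<in>Vs d. evA \<iota> v t1 / D v) + t1 ^ d * t2 ^ d * (\<Sum>v\<in>Vs d. 1 / D v)"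
    by (simp only: expand4 sum.distrib sum_distrib_left[symmetric])
  also have "\<dots> = ((al d)^2 * n1 * n2 / (EE d)^2 - al d * (la t1 d * n2 + la t2 d * n1) / EE d)
      + t1 ^ d * (la t2 d * al d / EE d - (al d)^2 * n2 / (EE d)^2)
      + t2 ^ d * (la t1 d * al d / EE d - (al d)^2 * n1 / (EE d)^2)
      + t1 ^ d * t2 ^ d * (al d / EE d)^2"
    using S12[OF x] S3[OF x, of t1] S3[OF x, of t2] S4[OF x, of t1 t2]
    by (simp add: EE_def D_def n1_def n2_def)
  also have "\<dots> = (al d / EE d)^2 * (t1 ^ d - n1) * (t2 ^ d - n2)
      + (al d / EE d) * (la t2 d * (t1 ^ d - n1) + la t1 d * (t2 ^ d - n2))"
    using EE_nz[of d] by (simp add: power2_eq_square field_simps)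
  also have "\<dots> = b1 * b2 / l^2 + (la t2 d * b1 + la t1 d * b2) / l"
    unfolding r T1 T2 by (simp add: power_divide)
  also have "\<dots> = b1 * b2 / ((t1 - \<theta>) * (t2 - \<theta>) * l^2)
        * ((t1 - \<theta>) * (t2 - \<theta>) + (t1 - \<theta>) * (\<theta> - \<theta> ^ (q ^ d)) + (t2 - \<theta>) * (\<theta> - \<theta> ^ (q ^ d)))"
  proof -
    have a1: "t1 - \<theta> \<noteq> 0" "t2 - \<theta> \<noteq> 0" using assms by auto
    have la1: "la t1 d = b1 * (\<theta> - \<theta> ^ (q ^ d)) / ((t1 - \<theta>) * l)"
      using la_formula[of t1 d] a1 l0 by (simp add: field_simps b1_def l_def)
    have la2: "la t2 d = b2 * (\<theta> - \<theta> ^ (q ^ d)) / ((t2 - \<theta>) * l)"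
      using la_formula[of t2 d] a1 l0 by (simp add: field_simps b2_def l_def)
    have alg: "B / l^2 + (B * D / (u2 * l) + B * D / (u1 * l)) / l = B / (u1 * u2 * l^2) * (u1 * u2 + u1 * D + u2 * D)"
      if "u1 \<noteq> 0" "u2 \<noteq> 0" "l \<noteq> 0" for B D u1 u2 l :: 'b
      using that by (simp add: field_simps power2_eq_square)
    have "la t2 d * b1 + la t1 d * b2 = b1 * b2 * (\<theta> - \<theta> ^ (q ^ d)) / ((t2 - \<theta>) * l) + b1 * b2 * (\<theta> - \<theta> ^ (q ^ d)) / ((t1 - \<theta>) * l)"
      unfolding la1 la2 by (simp add: algebra_simps)
    thus ?thesis using alg[OF a1 l0, of "b1 * b2" "\<theta> - \<theta> ^ (q ^ d)"] by simp
  qed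
  finally show ?thesis by (simp add: lcar_eval b1_def b2_def l_def)
qed

end



lemma tf_add: "to_fract (x + y) = to_fract x + (to_fract y :: 'b::idom fract)"
  by (simp add: to_fract_def)
lemma tf_mult: "to_fract (x * y) = to_fract x * (to_fract y :: 'b::idom fract)"
  by (simp add: to_fract_def)
lemma tf_eq: "to_fract x = (to_fract y :: 'b::idom fract) \<longleftrightarrow> x = y"
  by (simp add: to_fract_def eq_fract)
lemma tf_0: "to_fract 0 = (0 :: 'b::idom fract)"
  by (simp add: to_fract_def Zero_fract_def)
lemma tf_1: "to_fract 1 = (1 :: 'b::idom fract)"
  by (simp add: to_fract_def One_fract_def)
lemma tf_diff: "to_fract (x - y) = to_fract x - (to_fract y :: 'b::idom fract)"
  by (simp add: to_fract_def)

lemma pc_add: "[:x + y:] = [:x:] + [:y::'b::comm_ring_1:]" by simp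
lemma pc_mult: "[:x * y:] = [:x:] * [:y::'b::comm_ring_1:]" by simp

context fhom begin
lemma evA_via_hom:
  fixes g :: "'a poly \<Rightarrow> 'b"
  assumes gadd: "\<And>a b. g (a + b) = g a + g b" and gmul: "\<And>a b. g (a * b) = g a * g b"
    and gc: "\<And>c. g [:c:] = \<iota> c" and gX: "g [:0,1:] = x"
  shows "evA \<iota> a x = g a"
proof (induction a)
  case 0
  have "g 0 = 0" using gadd[of 0 0] by (metis add_cancel_left_right add_0)
  thus ?case by (simp add: evA_def)
next
  case (pCons c a)
  have "pCons c a = [:c:] + [:0,1:] * a" by simp
  hence "g (pCons c a) = \<iota> c + x * g a" by (simp only: gadd gmul gc gX)
  moreover have "evA \<iota> (pCons c a) x = \<iota> c + x * evA \<iota> a x"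
    by (simp add: evA_def map_poly_pCons)
  ultimately show ?case using pCons.IH by simp
qed
end

lemma const1_hom: "fhom (const1 :: 'a::{finite,field} \<Rightarrow> 'a K1) (card (UNIV :: 'a set))"
  if "card (UNIV :: 'a set) > 2"
proof unfold_locales
  show "const1 (x + y) = const1 x + const1 y" for x y :: 'a
    by (simp only: const1_def pc_add tf_add)
  show "const1 (x * y) = const1 x * const1 y" for x y :: 'a
    by (simp only: const1_def pc_mult tf_mult)
  show "const1 1 = 1" by (simp only: const1_def one_pCons[symmetric] tf_1)
  show "inj (const1 :: 'a \<Rightarrow> 'a K1)" by (auto simp: inj_def const1_def tf_eq)
qed (simp_all add: that)




lemma fctx1: assumes "card (UNIV :: 'a set) > 2"
  shows "fctx (const1 :: 'a::{finite,field} \<Rightarrow> 'a K1) (card (UNIV :: 'a set)) theta1"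
proof -
  interpret fhom "const1 :: 'a \<Rightarrow> 'a K1" "card (UNIV :: 'a set)" by (rule const1_hom[OF assms])
  have ev: "evA const1 a theta1 = to_fract [:to_fract a:]" for a :: "'a poly"
    by (rule evA_via_hom) (simp_all only: tf_add pc_add tf_mult pc_mult const1_def theta1_def)
  show ?thesis
  proof (unfold_locales)
    fix a :: "'a poly" assume "a \<noteq> 0"
    thus "evA const1 a theta1 \<noteq> 0" by (simp add: ev tf_0[symmetric] tf_eq)
  qed
qed

lemma const2_hom: "fhom (const2 :: 'a::{finite,field} \<Rightarrow> 'a K2) (card (UNIV :: 'a set))"
  if "card (UNIV :: 'a set) > 2"
proof -
  interpret fhom "const1 :: 'a \<Rightarrow> 'a K1" "card (UNIV :: 'a set)" by (rule const1_hom[OF that])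
  show ?thesis
  proof unfold_locales
    show "const2 (x + y) = const2 x + const2 y" for x y :: 'a
      by (simp only: const2_def hadd pc_add tf_add)
    show "const2 (x * y) = const2 x * const2 y" for x y :: 'a
      by (simp only: const2_def hmul pc_mult tf_mult)
    show "const2 1 = 1" by (simp only: const2_def const1_def one_pCons[symmetric] tf_1)
    show "inj (const2 :: 'a \<Rightarrow> 'a K2)" by (auto simp: inj_def const2_def tf_eq)
  qed (simp_all add: that)
qed

lemma fctx2: assumes "card (UNIV :: 'a set) > 2"
  shows "fctx (const2 :: 'a::{finite,field} \<Rightarrow> 'a K2) (card (UNIV :: 'a set)) theta2"
proof -
  interpret fhom "const2 :: 'a \<Rightarrow> 'a K2" "card (UNIV :: 'a set)" by (rule const2_hom[OF assms])
  have ev: "evA const2 a theta2 = to_fract [:to_fract [:to_fract a:]:]" for a :: "'a poly"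
    by (rule evA_via_hom) (simp_all only: tf_add pc_add tf_mult pc_mult const1_def const2_def theta1_def theta2_def)
  show ?thesis
  proof (unfold_locales)
    fix a :: "'a poly" assume "a \<noteq> 0"
    thus "evA const2 a theta2 \<noteq> 0" by (simp add: ev tf_0[symmetric] tf_eq)
  qed
qed

lemma t1_ne: "t1_1 \<noteq> (theta1 :: 'a::field K1)"
  unfolding t1_1_def theta1_def tf_eq by simp

lemma t1_ne2: "t1_2 \<noteq> (theta2 :: 'a::field K2)"
  unfolding t1_2_def theta2_def tf_eq using t1_ne by simp

lemma t2_ne2: "t2_2 \<noteq> (theta2 :: 'a::field K2)"
  unfolding t2_2_def theta2_def tf_eq by simp

theorem mainTheorem4:
  fixes d :: nat
  assumes "card (UNIV :: ('a::{finite,field}) set) > 2"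
  shows
   "(\<Sum>a\<in>(Aplus d :: 'a poly set).
        evA const1 a t1_1 / (evA const1 a theta1)^2)
      = bcar (card (UNIV :: 'a set)) d t1_1 theta1 * (t1_1 - theta1 ^ (card (UNIV :: 'a set) ^ d))
        / ((t1_1 - theta1) * (evA const1 (lcar d :: 'a poly) theta1)^2)
    \<and>
    (\<Sum>a\<in>(Aplus d :: 'a poly set).
        evA const2 a t1_2 * evA const2 a t2_2 / (evA const2 a theta2)^2)
      = bcar (card (UNIV :: 'a set)) d t1_2 theta2 * bcar (card (UNIV :: 'a set)) d t2_2 theta2
        / ((t1_2 - theta2) * (t2_2 - theta2) * (evA const2 (lcar d :: 'a poly) theta2)^2)
        * ((t1_2 - theta2) * (t2_2 - theta2)
           + (t1_2 - theta2) * (theta2 - theta2 ^ (card (UNIV :: 'a set) ^ d))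
           + (t2_2 - theta2) * (theta2 - theta2 ^ (card (UNIV :: 'a set) ^ d)))"
proof
  interpret F1: fctx "const1 :: 'a \<Rightarrow> 'a K1" "card (UNIV :: 'a set)" theta1 by (rule fctx1[OF assms])
  show "(\<Sum>a\<in>(Aplus d :: 'a poly set).
        evA const1 a t1_1 / (evA const1 a theta1)^2)
      = bcar (card (UNIV :: 'a set)) d t1_1 theta1 * (t1_1 - theta1 ^ (card (UNIV :: 'a set) ^ d))
        / ((t1_1 - theta1) * (evA const1 (lcar d :: 'a poly) theta1)^2)"
    by (rule F1.main1[OF t1_ne])
next
  interpret F2: fctx "const2 :: 'a \<Rightarrow> 'a K2" "card (UNIV :: 'a set)" theta2 by (rule fctx2[OF assms])
  show "(\<Sum>a\<in>(Aplus d :: 'a poly set).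
        evA const2 a t1_2 * evA const2 a t2_2 / (evA const2 a theta2)^2)
      = bcar (card (UNIV :: 'a set)) d t1_2 theta2 * bcar (card (UNIV :: 'a set)) d t2_2 theta2
        / ((t1_2 - theta2) * (t2_2 - theta2) * (evA const2 (lcar d :: 'a poly) theta2)^2)
        * ((t1_2 - theta2) * (t2_2 - theta2)
           + (t1_2 - theta2) * (theta2 - theta2 ^ (card (UNIV :: 'a set) ^ d))
           + (t2_2 - theta2) * (theta2 - theta2 ^ (card (UNIV :: 'a set) ^ d)))"
    by (rule F2.main2[OF t1_ne2 t2_ne2])
qed


end
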